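(* Let $(S,T,\alpha,\beta)$ be a matched product system of left inverse semi-braces. Then for all $a\in S$ and $u\in T$: $$\lambda_a\,\alpha_{\beta_a^{-1}(u)}=\alpha_u\,\lambda_{\alpha_u^{-1}(a)},\qquad \lambda_u\,\beta_{\alpha_u^{-1}(a)}=\beta_a\,\lambda_{\beta_a^{-1}(u)}$$ as maps $S\to S$ and $T\to T$ respectively.
   Context: An inverse semigroup is a semigroup $(S,\cdot)$ in which for each $a$ there is a unique $a^{-1}$ with $aa^{-1}a=a$, $a^{-1}aa^{-1}=a^{-1}$. A left inverse semi-brace is a triple $(S,+,\cdot)$ with $(S,+)$ a semigroup, $(S,\cdot)$ an inverse semigroup and $a(b+c)=ab+a(a^{-1}+c)$ for all $a,b,c$; in it set $\lambda_a(b)=a(a^{-1}+b)$ (similarly in $T$). A matched product system of left inverse semi-braces is a quadruple $(S,T,\alpha,\beta)$ where $S,T$ are left inverse semi-braces, $\alpha:T\to\mathrm{Aut}(S,+)$ is a homomorphism of inverse semigroups from $(T,\cdot)$ into the automorphism group of $(S,+)$, $\beta:S\to\mathrm{Aut}(T,+)$ is a homomorphism of inverse semigroups from $(S,\cdot)$ into the automorphism group of $(T,+)$ (write $\alpha_u=\alpha(u)$, $\beta_a=\beta(a)$, and $\alpha_u^{-1},\beta_a^{-1}$ for the inverse maps), such that for all $a,b\in S$, $u,v\in T$: $\alpha_u(\alpha_u^{-1}(a)\,b)=a\,\alpha_{\beta_a^{-1}(u)}(b)$ and $\beta_a(\beta_a^{-1}(u)\,v)=u\,\beta_{\alpha_u^{-1}(a)}(v)$;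 and if $\alpha_u(\alpha_u^{-1}(a)\,a)=a$ and $\beta_a(\beta_a^{-1}(u)\,u)=u$, then $\alpha_u(a)=a$ and $\beta_a(u)=u$. *)

theory Defs
  imports Main
begin

text \<open>Structures are carried by whole types: S is the type 'a with operations
  add (+) and mult (\<cdot>).\<close>

definition semigroup_op :: "('a \<Rightarrow> 'a \<Rightarrow> 'a) \<Rightarrow> bool" where
  "semigroup_op f \<longleftrightarrow> (\<forall>a b c. f (f a b) c = f a (f b c))"

definition inverse_semigroup :: "('a \<Rightarrow> 'a \<Rightarrow> 'a) \<Rightarrow> bool" where
  "inverse_semigroup mult \<longleftrightarrow> semigroup_op mult \<and>
     (\<forall>a. \<exists>!b. mult (mult a b) a = a \<and> mult (mult b a) b = b)"

definition isg_inv :: "('a \<Rightarrow> 'a \<Rightarrow> 'a) \<Rightarrow> 'a \<Rightarrow> 'a" where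
  "isg_inv mult a = (THE b. mult (mult a b) a = a \<and> mult (mult b a) b = b)"

definition left_inverse_semi_brace :: "('a \<Rightarrow> 'a \<Rightarrow> 'a) \<Rightarrow> ('a \<Rightarrow> 'a \<Rightarrow> 'a) \<Rightarrow> bool" where
  "left_inverse_semi_brace add mult \<longleftrightarrow> semigroup_op add \<and> inverse_semigroup mult \<and>
     (\<forall>a b c. mult a (add b c) = add (mult a b) (mult a (add (isg_inv mult a) c)))"

definition lam :: "('a \<Rightarrow> 'a \<Rightarrow> 'a) \<Rightarrow> ('a \<Rightarrow> 'a \<Rightarrow> 'a) \<Rightarrow> 'a \<Rightarrow> 'a \<Rightarrow> 'a" where
  "lam add mult a b = mult a (add (isg_inv mult a) b)"

definition add_aut :: "('a \<Rightarrow> 'a \<Rightarrow> 'a) \<Rightarrow> ('a \<Rightarrow> 'a) \<Rightarrow> bool" where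
  "add_aut add f \<longleftrightarrow> bij f \<and> (\<forall>a b. f (add a b) = add (f a) (f b))"

definition hom_into_aut :: "('b \<Rightarrow> 'b \<Rightarrow> 'b) \<Rightarrow> ('a \<Rightarrow> 'a \<Rightarrow> 'a) \<Rightarrow> ('b \<Rightarrow> 'a \<Rightarrow> 'a) \<Rightarrow> bool" where
  "hom_into_aut multT addS \<alpha> \<longleftrightarrow> (\<forall>u. add_aut addS (\<alpha> u)) \<and>
     (\<forall>u v. \<alpha> (multT u v) = \<alpha> u \<circ> \<alpha> v)"

definition matched_product_system ::
  "('a \<Rightarrow> 'a \<Rightarrow> 'a) \<Rightarrow> ('a \<Rightarrow> 'a \<Rightarrow> 'a) \<Rightarrow> ('b \<Rightarrow> 'b \<Rightarrow> 'b) \<Rightarrow> ('b \<Rightarrow> 'b \<Rightarrow> 'b)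
   \<Rightarrow> ('b \<Rightarrow> 'a \<Rightarrow> 'a) \<Rightarrow> ('a \<Rightarrow> 'b \<Rightarrow> 'b) \<Rightarrow> bool" where
  "matched_product_system addS multS addT multT \<alpha> \<beta> \<longleftrightarrow>
     left_inverse_semi_brace addS multS \<and> left_inverse_semi_brace addT multT \<and>
     hom_into_aut multT addS \<alpha> \<and> hom_into_aut multS addT \<beta> \<and>
     (\<forall>a b u. \<alpha> u (multS (inv (\<alpha> u) a) b) = multS a (\<alpha> (inv (\<beta> a) u) b)) \<and>
     (\<forall>a u v. \<beta> a (multT (inv (\<beta> a) u) v) = multT u (\<beta> (inv (\<alpha> u) a) v)) \<and>
     (\<forall>a u. \<alpha> u (multS (inv (\<alpha> u) a) a) = a \<and> \<beta> a (multT (inv (\<beta> a) u) u) = u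
        \<longrightarrow> \<alpha> u a = a \<and> \<beta> a u = u)"

end

theory Submission
  imports Defs
begin

lemma isg_assoc: "inverse_semigroup m \<Longrightarrow> m (m x y) z = m x (m y z)"
  unfolding inverse_semigroup_def semigroup_op_def by blast

lemma isg_uniq: "inverse_semigroup m \<Longrightarrow> m (m a b) a = a \<Longrightarrow> m (m b a) b = b
  \<Longrightarrow> m (m a c) a = a \<Longrightarrow> m (m c a) c = c \<Longrightarrow> b = c"
  unfolding inverse_semigroup_def by blast

lemma isg_inv_props: "inverse_semigroup m \<Longrightarrow>
  m (m a (isg_inv m a)) a = a \<and> m (m (isg_inv m a) a) (isg_inv m a) = isg_inv m a"
proof -
  assume "inverse_semigroup m"
  hence "\<exists>!b. m (m a b) a = a \<and> m (m b a) b = b" unfolding inverse_semigroup_def by blast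
  hence "m (m a (THE b. m (m a b) a = a \<and> m (m b a) b = b)) a = a \<and>
    m (m (THE b. m (m a b) a = a \<and> m (m b a) b = b) a) (THE b. m (m a b) a = a \<and> m (m b a) b = b)
    = (THE b. m (m a b) a = a \<and> m (m b a) b = b)" by (rule theI')
  thus ?thesis unfolding isg_inv_def .
qed

lemma idem_assoc: "inverse_semigroup m \<Longrightarrow> m x x = x \<Longrightarrow> m x (m x z) = m x z"
  by (simp add: isg_assoc[symmetric])

lemma idem_mult_idem:
  assumes I: "inverse_semigroup m" and e: "m e e = e" and f: "m f f = f"
  shows "m (m e f) (m e f) = m e f"
proof -
  note A = isg_assoc[OF I]
  define p where "p = m e f"
  define x where "x = isg_inv m p"
  have px: "m (m p x) p = p" "m (m x p) x = x" using isg_inv_props[OF I, of p] x_def by auto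
  define y where "y = m f (m x e)"
  have e2: "\<And>z. m e (m e z) = m e z" by (simp add: A[symmetric] e)
  have f2: "\<And>z. m f (m f z) = m f z" by (simp add: A[symmetric] f)
  have "m (m p y) p = m (m p x) p" unfolding p_def y_def by (simp add: A e2 f2 e)
  hence 1: "m (m p y) p = p" using px by simp
  have "m (m y p) y = m f (m (m (m x p) x) e)" unfolding p_def y_def by (simp add: A e2 f2 e)
  hence 2: "m (m y p) y = y" using px y_def by simp
  have xy: "x = y" using isg_uniq[OF I px 1 2] .
  have xx: "m x x = x"
  proof -
    have "m x x = m y y" using xy by simp
    also have "\<dots> = m f (m (m (m x p) x) e)" unfolding y_def p_def by (simp add: A)
    also have "\<dots> = y" using px(2) y_def by simp
    also have "\<dots> = x" using xy by simp
    finally show ?thesis .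
  qed
  have xxx: "m (m x x) x = x" using xx by simp
  have "p = x" using isg_uniq[OF I px(2) px(1) xxx xxx] .
  thus ?thesis using xx p_def by simp
qed

lemma idem_comm:
  assumes I: "inverse_semigroup m" and e: "m e e = e" and f: "m f f = f"
  shows "m e f = m f e"
proof -
  note A = isg_assoc[OF I]
  have ef: "m (m e f) (m e f) = m e f" using idem_mult_idem[OF I e f] .
  have fe: "m (m f e) (m f e) = m f e" using idem_mult_idem[OF I f e] .
  have e2: "\<And>z. m e (m e z) = m e z" by (simp add: A[symmetric] e)
  have f2: "\<And>z. m f (m f z) = m f z" by (simp add: A[symmetric] f)
  have ef2: "\<And>z. m e (m f (m e (m f z))) = m e (m f z)"
    using idem_assoc[OF I ef] unfolding A .
  have fe2: "\<And>z. m f (m e (m f (m e z))) = m f (m e z)"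
    using idem_assoc[OF I fe] unfolding A .
  have ef3: "m e (m f (m e f)) = m e f" using ef unfolding A .
  have fe3: "m f (m e (m f e)) = m f e" using fe unfolding A .
  have 1: "m (m (m e f) (m f e)) (m e f) = m e f" by (simp add: A e2 f2 ef2 ef3 f)
  have 2: "m (m (m f e) (m e f)) (m f e) = m f e" by (simp add: A e2 f2 fe2 fe3 e)
  have 3: "m (m (m e f) (m e f)) (m e f) = m e f" using ef by simp
  show ?thesis using isg_uniq[OF I 3 3 1 2] .
qed

lemma idem_unique:
  assumes I: "inverse_semigroup m" and e: "m e e = e" and ez: "e = m c z" and ec: "m e c = c"
  shows "e = m c (isg_inv m c)"
proof -
  note A = isg_assoc[OF I]
  define h where "h = m c (isg_inv m c)"
  have P: "m (m c (isg_inv m c)) c = c" using isg_inv_props[OF I, of c] by blast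
  have hh: "m h h = h" unfolding h_def using P by (simp add: A[symmetric])
  have he: "m h e = e" unfolding h_def ez using P by (simp add: A[symmetric])
  have eh: "m e h = h" unfolding h_def using ec by (simp add: A[symmetric])
  have "m h e = m e h" using idem_comm[OF I hh e] .
  thus ?thesis using he eh h_def by simp
qed

lemma aut_facts:
  assumes "hom_into_aut multT addS \<alpha>"
  shows "\<alpha> u (inv (\<alpha> u) x) = x" "inv (\<alpha> u) (\<alpha> u x) = x"
    "\<alpha> u (addS x y) = addS (\<alpha> u x) (\<alpha> u y)"
    "\<alpha> u x = \<alpha> u y \<Longrightarrow> x = y"
proof -
  have b: "bij (\<alpha> u)" and h: "\<And>x y. \<alpha> u (addS x y) = addS (\<alpha> u x) (\<alpha> u y)"
    using assms unfolding hom_into_aut_def add_aut_def by auto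
  show "\<alpha> u (inv (\<alpha> u) x) = x" using b by (simp add: bij_is_surj surj_f_inv_f)
  show "inv (\<alpha> u) (\<alpha> u x) = x" using b by (simp add: bij_is_inj)
  show "\<alpha> u (addS x y) = addS (\<alpha> u x) (\<alpha> u y)" using h .
  show "\<alpha> u x = \<alpha> u y \<Longrightarrow> x = y" using b by (simp add: bij_is_inj inj_eq)
qed

lemma aut_idem:
  assumes H: "hom_into_aut multT addS \<alpha>" and e: "multT e e = e"
  shows "\<alpha> e = id"
proof
  fix x
  have "\<alpha> (multT e e) = \<alpha> e \<circ> \<alpha> e" using H unfolding hom_into_aut_def by blast
  hence "\<alpha> e = \<alpha> e \<circ> \<alpha> e" using e by simp
  hence "\<alpha> e x = (\<alpha> e \<circ> \<alpha> e) x" by (rule fun_cong)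
  hence "\<alpha> e (\<alpha> e x) = \<alpha> e x" unfolding comp_apply by (rule sym)
  thus "\<alpha> e x = id x" using aut_facts(4)[OF H] by simp
qed

lemma half:
  assumes M: "matched_product_system addS multS addT multT \<alpha> \<beta>"
  shows "lam addS multS a (\<alpha> (inv (\<beta> a) u) b) = \<alpha> u (lam addS multS (inv (\<alpha> u) a) b)"
proof -
  let ?m = multS and ?p = addS and ?i = "isg_inv multS"
  have B: "left_inverse_semi_brace addS multS" and HA: "hom_into_aut multT addS \<alpha>"
    and HB: "hom_into_aut multS addT \<beta>"
    and Ax: "\<And>a b u. \<alpha> u (multS (inv (\<alpha> u) a) b) = multS a (\<alpha> (inv (\<beta> a) u) b)"
    using M unfolding matched_product_system_def by blast+
  have I: "inverse_semigroup multS" and br: "\<And>a b c. multS a (addS b c) = addS (multS a b) (multS a (addS (isg_inv multS a) c))"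
    using B unfolding left_inverse_semi_brace_def by blast+
  note A = isg_assoc[OF I]
  note af = aut_facts[OF HA]
  have AxI: "\<alpha> u (multS (inv (\<alpha> u) f) y) = multS f (\<alpha> u y)" if "multS f f = f" for f y
  proof -
    have "\<beta> f = id" using aut_idem[OF HB that] .
    hence "inv (\<beta> f) u = u" by (simp add: inv_id)
    thus ?thesis using Ax[where a=f and b=y and u=u] by simp
  qed
  define c where "c = inv (\<alpha> u) a"
  define w where "w = inv (\<beta> a) u"
  define f where "f = multS a (?i a)"
  have P: "multS (multS a (?i a)) a = a" using isg_inv_props[OF I, of a] by blast
  have ff: "multS f f = f" unfolding f_def using P by (simp add: A[symmetric])
  define g where "g = inv (\<alpha> u) f"
  have "\<alpha> u (multS g g) = \<alpha> u g" unfolding g_def using AxI[OF ff] ff af(1) by simp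
  hence gg: "multS g g = g" using af(4) by blast
  have "\<alpha> u (multS g c) = \<alpha> u c" unfolding g_def c_def using AxI[OF ff] af(1) P f_def by simp
  hence gc: "multS g c = c" using af(4) by blast
  define z where "z = inv (\<alpha> w) (?i a)"
  have cz: "\<alpha> u (multS c z) = f" unfolding c_def z_def f_def w_def using Ax af(1) by simp
  have "\<alpha> u (multS c z) = \<alpha> u g" using cz g_def af(1) by simp
  hence gcz: "g = multS c z" using af(4) by blast
  have g_eq: "g = multS c (?i c)" using idem_unique[OF I gg gcz gc] .
  have "\<alpha> u g = f" unfolding g_def using af(1) .
  hence fc: "\<alpha> u (multS c (?i c)) = f" using g_eq by simp
  define R where "R = \<alpha> u (multS c (addS (?i c) b))"
  have e1: "multS c (addS (?i c) b) = addS (multS c (?i c)) (multS c (addS (?i c) b))"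
    using br[of c "?i c" b] .
  have "\<alpha> u (multS c (addS (?i c) b)) = \<alpha> u (addS (multS c (?i c)) (multS c (addS (?i c) b)))"
    using arg_cong[OF e1, of "\<alpha> u"] .
  hence R1: "R = addS f R" unfolding R_def using af(3) fc by simp
  have "\<alpha> u (multS c (addS z b)) = addS f R"
    unfolding R_def using br[of c z b] af(3) cz by simp
  moreover have "\<alpha> u (multS c (addS z b)) = multS a (addS (?i a) (\<alpha> w b))"
    unfolding c_def using Ax[where a=a and b="addS z b" and u=u] aut_facts(3)[OF HA, of w] af(1)[of w] z_def w_def by simp
  ultimately have "multS a (addS (?i a) (\<alpha> w b)) = R" using R1 by simp
  thus ?thesis unfolding lam_def R_def c_def w_def by simp
qed

lemma mps_sym:
  fixes addS multS :: "'a \<Rightarrow> 'a \<Rightarrow> 'a" and addT multT :: "'b \<Rightarrow> 'b \<Rightarrow> 'b"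
    and \<alpha> :: "'b \<Rightarrow> 'a \<Rightarrow> 'a" and \<beta> :: "'a \<Rightarrow> 'b \<Rightarrow> 'b"
  shows "matched_product_system addS multS addT multT \<alpha> \<beta> \<Longrightarrow>
  matched_product_system addT multT addS multS \<beta> \<alpha>"
  unfolding matched_product_system_def
proof (elim conjE, intro conjI)
  assume H: "\<forall>a u. \<alpha> u (multS (inv (\<alpha> u) a) a) = a \<and> \<beta> a (multT (inv (\<beta> a) u) u) = u \<longrightarrow>
        \<alpha> u a = a \<and> \<beta> a u = u"
  show "\<forall>a u. \<beta> u (multT (inv (\<beta> u) a) a) = a \<and> \<alpha> a (multS (inv (\<alpha> a) u) u) = u \<longrightarrow>
        \<beta> u a = a \<and> \<alpha> a u = u"
  proof (intro allI impI)
    fix a :: 'b and u :: 'a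
    assume "\<beta> u (multT (inv (\<beta> u) a) a) = a \<and> \<alpha> a (multS (inv (\<alpha> a) u) u) = u"
    thus "\<beta> u a = a \<and> \<alpha> a u = u" using H[rule_format, of a u] by simp
  qed
qed (blast+)

theorem lemma26:
  fixes addS multS :: "'a \<Rightarrow> 'a \<Rightarrow> 'a" and addT multT :: "'b \<Rightarrow> 'b \<Rightarrow> 'b"
    and \<alpha> :: "'b \<Rightarrow> 'a \<Rightarrow> 'a" and \<beta> :: "'a \<Rightarrow> 'b \<Rightarrow> 'b"
  assumes "matched_product_system addS multS addT multT \<alpha> \<beta>"
  shows "\<forall>a u.
     lam addS multS a \<circ> \<alpha> (inv (\<beta> a) u) = \<alpha> u \<circ> lam addS multS (inv (\<alpha> u) a) \<and>
     lam addT multT u \<circ> \<beta> (inv (\<alpha> u) a) = \<beta> a \<circ> lam addT multT (inv (\<beta> a) u)"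
proof (intro allI conjI ext)
  fix a u b
  show "(lam addS multS a \<circ> \<alpha> (inv (\<beta> a) u)) b = (\<alpha> u \<circ> lam addS multS (inv (\<alpha> u) a)) b"
    using half[OF assms] by simp
next
  fix a u v
  show "(lam addT multT u \<circ> \<beta> (inv (\<alpha> u) a)) v = (\<beta> a \<circ> lam addT multT (inv (\<beta> a) u)) v"
    using half[OF mps_sym[OF assms]] by simp
qed

end
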